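(* Fix a plane tree $T$ with $n\ge 1$ edges and let $F(T)$ be the forest obtained by deleting its root (the ordered list of subtrees rooted at the children of the root). The map sending a labeling $\ell$ such that $(T,\ell)$ is a sticky tree to the function $v\mapsto c(v)-1$ on the nodes of $F(T)$, where $c$ is the certificate-counting function of $(T,\ell)$, is a bijection from the set of such labelings onto the set of closed flows on $F(T)$.
   Context: Sticky trees: a plane tree is a rooted tree in which the children of every node are linearly ordered (left to right). The root has depth $0$, a child of a node of depth $d$ has depth $d+1$. The prefix order is: the root, followed by the prefix order of the subtree of its leftmost child, then of its second child, and so on. $S_u$ denotes the subtree rooted at $u$. A sticky tree is a plane tree $S$ with node set $V$ and a labeling $\ell:V\to\mathbb{N}$ such that: (1) every node $u$ of depth $d$ has $0\le\ell(u)\le d$; (2) every node $u$ of depth $d>0$ has some $v\in S_u$ (possibly $v=u$) with $\ell(v)<d$; (3) for every node $u$ of depth $d$, if some $v\in S_u$ has $\ell(v)=d$, then every node of $S_u$ (including $u$) preceding $v$ in prefix order has label at least $d$. The certificate of a non-root node $u$ of depth $d$ is the first node, in prefix order, of $S_u$ whose label is $<d$. The certificate-counting function $c:V\to\mathbb{N}$ assigns to each node $w$ the number of non-root nodes whose certificate is $w$. Flows: a forest is an ordered list $(A_1,\dots,A_k)$ of plane trees. A flow on a forest $F$ is an integer-valued function $f$ on its nodes with $f(v)\ge -1$ for every node $v$ and such that the outgoing rate of every node is nonnegative, where the outgoing rate of $v$ is $\sum_{w} f(w)$ over all nodes $w$ of the subtree of $F$ rooted at $v$ (including $v$). A flow is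 closed if the outgoing rate of the root of every $A_i$ is $0$. *)

theory Defs
  imports Main "HOL-Library.FuncSet"
begin

datatype ptree = Node "ptree list"

text \<open>Nodes of a plane tree are addressed by paths (lists of child indices)
  from the root; the root is the empty path and the depth of a node is the
  length of its path.\<close>
fun is_node :: "ptree \<Rightarrow> nat list \<Rightarrow> bool" where
  "is_node t [] = True"
| "is_node (Node ts) (i # p) = (i < length ts \<and> is_node (ts ! i) p)"

definition nodes :: "ptree \<Rightarrow> nat list set" where
  "nodes t = {p. is_node t p}"

definition num_edges :: "ptree \<Rightarrow> nat" where
  "num_edges t = card (nodes t) - 1"

definition depth :: "nat list \<Rightarrow> nat" where
  "depth u = length u"

definition subtree :: "ptree \<Rightarrow> nat list \<Rightarrow> nat list set" where
  "subtree t u = {v \<in> nodes t. \<exists>w. v = u @ w}"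

text \<open>Prefix order: strict lexicographic order on paths in which a proper
  prefix (ancestor) comes first.\<close>
definition precedes :: "nat list \<Rightarrow> nat list \<Rightarrow> bool" where
  "precedes u v \<longleftrightarrow> (u, v) \<in> lexord {(a, b). a < b}"

definition sticky :: "ptree \<Rightarrow> (nat list \<Rightarrow> nat) \<Rightarrow> bool" where
  "sticky t l \<longleftrightarrow>
     (\<forall>u\<in>nodes t. l u \<le> depth u) \<and>
     (\<forall>u\<in>nodes t. depth u > 0 \<longrightarrow> (\<exists>v\<in>subtree t u. l v < depth u)) \<and>
     (\<forall>u\<in>nodes t. \<forall>v\<in>subtree t u. l v = depth u \<longrightarrow>
        (\<forall>w\<in>subtree t u. precedes w v \<longrightarrow> l w \<ge> depth u))"

definition certificate :: "ptree \<Rightarrow> (nat list \<Rightarrow> nat) \<Rightarrow> nat list \<Rightarrow> nat list" where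
  "certificate t l u = (THE v. v \<in> subtree t u \<and> l v < depth u \<and>
      (\<forall>w\<in>subtree t u. precedes w v \<longrightarrow> \<not> l w < depth u))"

definition cert_count :: "ptree \<Rightarrow> (nat list \<Rightarrow> nat) \<Rightarrow> nat list \<Rightarrow> nat" where
  "cert_count t l w = card {u \<in> nodes t. u \<noteq> [] \<and> certificate t l u = w}"

definition sticky_labelings :: "ptree \<Rightarrow> (nat list \<Rightarrow> nat) set" where
  "sticky_labelings t = {l. l \<in> extensional (nodes t) \<and> sticky t l}"

text \<open>The forest F(t) obtained by deleting the root: its nodes are the
  non-root nodes of t, the subtree of F(t) at a node v coincides with the
  subtree of t at v, and the roots of its trees are the children [i] of the
  root of t.\<close>
definition forest_nodes :: "ptree \<Rightarrow> nat list set" where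
  "forest_nodes t = nodes t - {[]}"

definition out_rate :: "ptree \<Rightarrow> (nat list \<Rightarrow> int) \<Rightarrow> nat list \<Rightarrow> int" where
  "out_rate t f v = (\<Sum>w\<in>subtree t v. f w)"

definition is_flow :: "ptree \<Rightarrow> (nat list \<Rightarrow> int) \<Rightarrow> bool" where
  "is_flow t f \<longleftrightarrow> (\<forall>v\<in>forest_nodes t. f v \<ge> -1 \<and> out_rate t f v \<ge> 0)"

definition closed_flows :: "ptree \<Rightarrow> (nat list \<Rightarrow> int) set" where
  "closed_flows t = {f. f \<in> extensional (forest_nodes t) \<and> is_flow t f \<and>
      (\<forall>i. [i] \<in> forest_nodes t \<longrightarrow> out_rate t f [i] = 0)}"

definition flow_of_labeling :: "ptree \<Rightarrow> (nat list \<Rightarrow> nat) \<Rightarrow> nat list \<Rightarrow> int" where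
  "flow_of_labeling t l = restrict (\<lambda>v. int (cert_count t l v) - 1) (forest_nodes t)"

end

theory Submission
  imports Defs
begin


lemma prec_iff: "precedes u v \<longleftrightarrow> ord_class.lexordp u v"
  by (simp add: precedes_def lexordp_conv_lexord)

lemma prec_trans: "precedes a b \<Longrightarrow> precedes b c \<Longrightarrow> precedes a c"
  unfolding prec_iff using lexordp_trans by blast

lemma prec_irrefl: "\<not> precedes a a"
  unfolding prec_iff by (rule lexordp_irreflexive') 

lemma prec_total: "a \<noteq> b \<Longrightarrow> precedes a b \<or> precedes b a"
  unfolding prec_iff using lexordp_linear by blast

lemma prec_ext: "v \<noteq> [] \<Longrightarrow> precedes u (u @ v)"
  unfolding prec_iff by (simp add: lexordp_append_rightI)

lemma prec_not_ext: "\<not> precedes (u @ v) u"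
  by (metis append.right_neutral prec_ext prec_irrefl prec_trans)

lemma prec_Nil: "\<not> precedes x []"
  unfolding precedes_def by simp

lemma prec_nonprefix:
  assumes "precedes u w" "\<not> (\<exists>v. w = u @ v)"
  shows "precedes (u @ v) w"
proof -
  from assms(1) have "ord_class.lexordp u w" by (simp add: prec_iff)
  then obtain us a b vs ws where "a < b" "u = us @ a # vs" "w = us @ b # ws"
    using assms(2) unfolding lexordp_iff by blast
  then show ?thesis unfolding prec_iff lexordp_iff by auto
qed

lemma is_node_append: "is_node t (p @ q) \<Longrightarrow> is_node t p"
proof (induction p arbitrary: t)
  case Nil then show ?case by simp
next
  case (Cons i p) then show ?case by (cases t) auto
qed

lemma nodes_Node: "nodes (Node ts) = insert [] (\<Union>i<length ts. (Cons i) ` nodes (ts ! i))"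
proof (rule set_eqI)
  fix p show "p \<in> nodes (Node ts) \<longleftrightarrow> p \<in> insert [] (\<Union>i<length ts. (Cons i) ` nodes (ts ! i))"
    by (cases p) (auto simp: nodes_def)
qed

lemma finite_nodes: "finite (nodes t)"
proof (induction t)
  case (Node ts)
  then show ?case by (simp add: nodes_Node)
qed

lemma subtree_nodes: "x \<in> subtree t u \<Longrightarrow> x \<in> nodes t"
  by (simp add: subtree_def)

lemma subtree_root: "x \<in> subtree t u \<Longrightarrow> u \<in> nodes t"
  by (auto simp: subtree_def nodes_def intro: is_node_append)

lemma finite_subtree: "finite (subtree t u)"
  using finite_nodes by (simp add: subtree_def)

lemma self_subtree: "u \<in> nodes t \<Longrightarrow> u \<in> subtree t u"
  by (simp add: subtree_def)

lemma prefix_node: "u @ v \<in> nodes t \<Longrightarrow> u \<in> nodes t"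
  by (auto simp: nodes_def intro: is_node_append)

lemma min_exists:
  assumes "finite S" "S \<noteq> {}"
  shows "\<exists>m\<in>S. \<forall>y\<in>S. \<not> precedes y m"
  using assms
proof (induction S rule: finite_ne_induct)
  case (singleton x) then show ?case by (simp add: prec_irrefl)
next
  case (insert a S)
  then obtain m where m: "m \<in> S" "\<forall>y\<in>S. \<not> precedes y m" by blast
  show ?case
  proof (cases "precedes a m")
    case True
    then show ?thesis using m prec_trans prec_irrefl by blast
  next
    case False then show ?thesis using m by blast
  qed
qed

lemma max_exists:
  assumes "finite S" "S \<noteq> {}"
  shows "\<exists>m\<in>S. \<forall>y\<in>S. \<not> precedes m y"
  using assms
proof (induction S rule: finite_ne_induct)
  case (singleton x) then show ?case by (simp add: prec_irrefl)
next
  case (insert a S)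
  then obtain m where m: "m \<in> S" "\<forall>y\<in>S. \<not> precedes m y" by blast
  show ?case
  proof (cases "precedes m a")
    case True
    then show ?thesis using m prec_trans prec_irrefl by blast
  next
    case False then show ?thesis using m by blast
  qed
qed

lemma prefix_comparable: "x = u @ a \<Longrightarrow> x = v @ b \<Longrightarrow> (\<exists>c. v = u @ c) \<or> (\<exists>c. u = v @ c)"
  by (metis append_eq_append_conv2)



definition waitL :: "ptree \<Rightarrow> (nat list \<Rightarrow> nat) \<Rightarrow> nat list \<Rightarrow> nat list \<Rightarrow> bool" where
  "waitL t l u w \<longleftrightarrow> (\<forall>x\<in>subtree t u. precedes x w \<longrightarrow> length u \<le> l x)"

definition certBy :: "ptree \<Rightarrow> (nat list \<Rightarrow> nat) \<Rightarrow> nat list \<Rightarrow> nat list \<Rightarrow> bool" where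
  "certBy t l u x \<longleftrightarrow> x \<in> subtree t u \<and> l x < length u \<and> waitL t l u x"

definition Cs :: "ptree \<Rightarrow> (nat list \<Rightarrow> nat) \<Rightarrow> nat list \<Rightarrow> nat list set" where
  "Cs t l x = {u. u \<noteq> [] \<and> certBy t l u x}"

definition Dw :: "ptree \<Rightarrow> (nat list \<Rightarrow> nat) \<Rightarrow> nat list \<Rightarrow> nat set" where
  "Dw t l w = {d. 1 \<le> d \<and> d \<le> length w \<and> waitL t l (take d w) w}"

definition Good :: "ptree \<Rightarrow> (nat list \<Rightarrow> nat) \<Rightarrow> (nat list \<Rightarrow> nat) \<Rightarrow> nat list \<Rightarrow> bool" where
  "Good t c l w \<longleftrightarrow> l w \<le> length w \<and> (w \<noteq> [] \<longrightarrow> card {d\<in>Dw t l w. l w < d} = c w)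
     \<and> (l w = 0 \<or> l w \<in> Dw t l w)"

lemma certBy_unique:
  assumes "certBy t l u x1" "certBy t l u x2" shows "x1 = x2"
proof (rule ccontr)
  assume "x1 \<noteq> x2"
  then have "precedes x1 x2 \<or> precedes x2 x1" by (rule prec_total)
  then show False using assms unfolding certBy_def waitL_def by (meson not_le)
qed

lemma cert_min:
  assumes "x \<in> subtree t u" "l x < length u"
  shows "\<exists>y. certBy t l u y \<and> (y = x \<or> precedes y x)"
proof -
  let ?S = "{y\<in>subtree t u. l y < length u \<and> (y = x \<or> precedes y x)}"
  have "finite ?S" using finite_subtree by simp
  moreover have "?S \<noteq> {}" using assms by blast
  ultimately obtain m where m: "m \<in> ?S" "\<forall>y\<in>?S. \<not> precedes y m" using min_exists by blast
  have "waitL t l u m"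
    unfolding waitL_def
  proof (intro ballI impI)
    fix z assume z: "z \<in> subtree t u" "precedes z m"
    show "length u \<le> l z"
    proof (rule ccontr)
      assume "\<not> length u \<le> l z"
      then have "z \<in> ?S" using z m(1) prec_trans by auto
      then show False using m(2) z(2) by blast
    qed
  qed
  then show ?thesis using m(1) unfolding certBy_def by blast
qed

lemma take_inj: "inj_on (\<lambda>d. take d w) {d. d \<le> length w}"
proof (rule inj_onI)
  fix a b assume "a \<in> {d. d \<le> length w}" "b \<in> {d. d \<le> length w}" "take a w = take b w"
  then have "length (take a w) = length (take b w)" by simp
  then show "a = b" using \<open>a \<in> _\<close> \<open>b \<in> _\<close> by simp
qed

lemma Cs_eq:
  assumes "w \<in> nodes t"
  shows "Cs t l w = (\<lambda>d. take d w) ` {d\<in>Dw t l w. l w < d}"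
proof (rule set_eqI)
  fix u
  show "u \<in> Cs t l w \<longleftrightarrow> u \<in> (\<lambda>d. take d w) ` {d\<in>Dw t l w. l w < d}"
  proof
    assume "u \<in> Cs t l w"
    then have u: "u \<noteq> []" "w \<in> subtree t u" "l w < length u" "waitL t l u w"
      by (auto simp: Cs_def certBy_def)
    then obtain v where v: "w = u @ v" by (auto simp: subtree_def)
    then have "take (length u) w = u" by simp
    moreover have "length u \<in> {d\<in>Dw t l w. l w < d}"
      using u v by (auto simp: Dw_def)
    ultimately show "u \<in> (\<lambda>d. take d w) ` {d\<in>Dw t l w. l w < d}" using image_eqI[of u "\<lambda>d. take d w" "length u"] by simp
  next
    assume "u \<in> (\<lambda>d. take d w) ` {d\<in>Dw t l w. l w < d}"
    then obtain d where d: "u = take d w" "1 \<le> d" "d \<le> length w" "waitL t l u w" "l w < d"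
      by (auto simp: Dw_def)
    have "w = u @ drop d w" using d by simp
    then have "w \<in> subtree t u" using assms by (auto simp: subtree_def)
    moreover have "length u = d" using d by simp
    moreover have "u \<noteq> []" using d by auto
    ultimately show "u \<in> Cs t l w" using d by (auto simp: Cs_def certBy_def)
  qed
qed

lemma finite_Dw: "finite (Dw t l w)"
  by (rule finite_subset[of _ "{..length w}"]) (auto simp: Dw_def)

lemma card_Cs:
  assumes "w \<in> nodes t"
  shows "card (Cs t l w) = card {d\<in>Dw t l w. l w < d}"
  unfolding Cs_eq[OF assms]
  by (rule card_image, rule inj_on_subset[OF take_inj]) (auto simp: Dw_def)

lemma wait_local:
  assumes "\<forall>y\<in>nodes t. precedes y w \<longrightarrow> l y = l' y"
  shows "waitL t l u w = waitL t l' u w"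
  unfolding waitL_def
proof (intro iffI ballI impI)
  fix x assume "\<forall>x\<in>subtree t u. precedes x w \<longrightarrow> length u \<le> l x" "x \<in> subtree t u" "precedes x w"
  then show "length u \<le> l' x" using assms subtree_nodes[of x t u] by auto
next
  fix x assume "\<forall>x\<in>subtree t u. precedes x w \<longrightarrow> length u \<le> l' x" "x \<in> subtree t u" "precedes x w"
  then show "length u \<le> l x" using assms subtree_nodes[of x t u] by auto
qed

lemma Dw_local:
  assumes "\<forall>y\<in>nodes t. precedes y w \<longrightarrow> l y = l' y"
  shows "Dw t l w = Dw t l' w"
  using wait_local[OF assms] unfolding Dw_def by simp

lemma Good_local:
  assumes "\<forall>y\<in>nodes t. precedes y w \<longrightarrow> l y = l' y" "l w = l' w"
  shows "Good t c l w = Good t c l' w"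
  using Dw_local[OF assms(1)] assms(2) unfolding Good_def by simp

lemma ostat_exists:
  fixes D :: "nat set"
  assumes "finite D" "\<forall>d\<in>D. 0 < d" "c \<le> card D"
  shows "\<exists>v. (v = 0 \<or> v \<in> D) \<and> card {d\<in>D. v < d} = c"
  using assms
proof (induction "card D" arbitrary: D c)
  case 0
  then have "D = {}" by simp
  then show ?case using 0 by auto
next
  case (Suc n)
  show ?case
  proof (cases "c = card D")
    case True
    then have "{d\<in>D. 0 < d} = D" using Suc.prems by auto
    then show ?thesis using True by (intro exI[of _ 0]) simp
  next
    case False
    then have c: "c < card D" using Suc.prems by simp
    have "D \<noteq> {}" using Suc.hyps by auto
    define m where "m = Max D"
    have mD: "m \<in> D" using \<open>D \<noteq> {}\<close> Suc.prems(1) by (simp add: m_def)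
    have mmax: "\<forall>d\<in>D. d \<le> m" using Suc.prems(1) by (simp add: m_def)
    show ?thesis
    proof (cases c)
      case 0
      have "{d\<in>D. m < d} = {}" using mmax by auto
      then have "card {d\<in>D. m < d} = 0" by (simp only: card.empty)
      then show ?thesis using 0 mD by blast
    next
      case (Suc c')
      have cardD': "card (D - {m}) = n" using Suc.hyps(2) mD Suc.prems(1) by simp
      have "c' \<le> card (D - {m})" using c Suc cardD' Suc.hyps(2) by simp
      moreover have "finite (D - {m})" using Suc.prems(1) by blast
      moreover have "\<forall>d\<in>D - {m}. 0 < d" using Suc.prems(2) by blast
      ultimately have "\<exists>v. (v = 0 \<or> v \<in> D - {m}) \<and> card {d\<in>D - {m}. v < d} = c'"
        using Suc.hyps(1)[OF cardD'[symmetric]] by blast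
      then obtain v where v: "v = 0 \<or> v \<in> D - {m}" "card {d\<in>D - {m}. v < d} = c'"
        by blast
      have vm: "v < m"
      proof (cases "v = 0")
        case True then show ?thesis using mD Suc.prems(2) by blast
      next
        case False then have "v \<in> D" "v \<noteq> m" using v(1) by auto
        then show ?thesis using mmax by (meson le_neq_implies_less)
      qed
      have "{d\<in>D. v < d} = insert m {d\<in>D - {m}. v < d}" using vm mD by auto
      moreover have "finite {d\<in>D - {m}. v < d}" using Suc.prems(1) by simp
      moreover have "m \<notin> {d\<in>D - {m}. v < d}" by simp
      ultimately have "card {d\<in>D. v < d} = Suc c'"
        using v(2) by simp
      then show ?thesis using v(1) Suc by blast
    qed
  qed
qed

lemma ostat_unique:
  fixes D :: "nat set"
  assumes "finite D" "\<forall>d\<in>D. 0 < d" "v1 = 0 \<or> v1 \<in> D" "v2 = 0 \<or> v2 \<in> D"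
    "card {d\<in>D. v1 < d} = card {d\<in>D. v2 < d}"
  shows "v1 = v2"
proof (rule ccontr)
  assume ne: "v1 \<noteq> v2"
  have *: "card {d\<in>D. a < d} < card {d\<in>D. b < d}" if "b < a" "a \<in> D" for a b
  proof (rule psubset_card_mono)
    show "finite {d\<in>D. b < d}" using assms(1) by simp
    show "{d\<in>D. a < d} \<subset> {d\<in>D. b < d}" using that by auto
  qed
  show False
  proof (cases "v1 < v2")
    case True
    then have "v2 \<in> D" using assms(4) by auto
    then show False using *[OF True] assms(5) by simp
  next
    case False
    then have "v2 < v1" using ne by simp
    then have "v1 \<in> D" using assms(3) by auto
    then show False using *[OF \<open>v2 < v1\<close>] assms(5) by simp
  qed
qed



lemma certificate_eq:
  assumes "certBy t l u x" shows "certificate t l u = x"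
  unfolding certificate_def
proof (rule the_equality)
  show "x \<in> subtree t u \<and> l x < depth u \<and> (\<forall>w\<in>subtree t u. precedes w x \<longrightarrow> \<not> l w < depth u)"
    using assms unfolding certBy_def waitL_def depth_def by (auto simp: not_less)
next
  fix v assume "v \<in> subtree t u \<and> l v < depth u \<and> (\<forall>w\<in>subtree t u. precedes w v \<longrightarrow> \<not> l w < depth u)"
  then have "certBy t l u v" unfolding certBy_def waitL_def depth_def by (auto simp: not_less)
  then show "v = x" using certBy_unique assms by blast
qed

lemma sticky_cert:
  assumes "sticky t l" "u \<in> nodes t" "u \<noteq> []"
  shows "\<exists>x. certBy t l u x"
proof -
  from assms have "\<exists>v\<in>subtree t u. l v < depth u" unfolding sticky_def depth_def by auto
  then obtain v where "v\<in>subtree t u" "l v < length u" by (auto simp: depth_def)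
  then show ?thesis using cert_min by blast
qed

lemma certBy_node: "certBy t l u x \<Longrightarrow> u \<in> nodes t"
  unfolding certBy_def using subtree_root by blast

lemma cert_count_eq:
  assumes "sticky t l"
  shows "cert_count t l x = card (Cs t l x)"
proof -
  have "{u \<in> nodes t. u \<noteq> [] \<and> certificate t l u = x} = Cs t l x"
  proof (rule set_eqI, rule iffI)
    fix u assume u: "u \<in> {u \<in> nodes t. u \<noteq> [] \<and> certificate t l u = x}"
    then obtain y where y: "certBy t l u y" using sticky_cert[OF assms] by blast
    then have "certificate t l u = y" by (rule certificate_eq)
    then show "u \<in> Cs t l x" using u y by (auto simp: Cs_def)
  next
    fix u assume "u \<in> Cs t l x"
    then show "u \<in> {u \<in> nodes t. u \<noteq> [] \<and> certificate t l u = x}"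
      using certificate_eq certBy_node by (auto simp: Cs_def)
  qed
  then show ?thesis by (simp add: cert_count_def)
qed

lemma sticky_Good:
  assumes "sticky t l" "w \<in> nodes t"
  shows "Good t (\<lambda>x. card (Cs t l x)) l w"
proof -
  have le: "l w \<le> length w" using assms unfolding sticky_def depth_def by auto
  have "l w = 0 \<or> l w \<in> Dw t l w"
  proof (cases "l w = 0")
    case False
    let ?u = "take (l w) w"
    have wu: "w = ?u @ drop (l w) w" by simp
    then have un: "?u \<in> nodes t" using assms(2) prefix_node by metis
    have ws: "w \<in> subtree t ?u" using wu assms(2) unfolding subtree_def by blast
    have lu: "length ?u = l w" using le by simp
    have "\<forall>x\<in>subtree t ?u. precedes x w \<longrightarrow> length ?u \<le> l x"
      using assms(1) un ws lu unfolding sticky_def depth_def by auto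
    then show ?thesis using False le unfolding Dw_def waitL_def by simp
  qed simp
  then show ?thesis using le card_Cs[OF assms(2)] unfolding Good_def by simp
qed

lemma finite_Cs: "finite (Cs t l x)"
proof (rule finite_subset)
  show "Cs t l x \<subseteq> (\<lambda>d. take d x) ` {..length x}"
  proof
    fix u assume "u \<in> Cs t l x"
    then obtain b where "x = u @ b" by (auto simp: Cs_def certBy_def subtree_def)
    then show "u \<in> (\<lambda>d. take d x) ` {..length x}"
      using image_eqI[of u "\<lambda>d. take d x" "length u"] by simp
  qed
qed simp

lemma Cs_disj: "x \<noteq> y \<Longrightarrow> Cs t l x \<inter> Cs t l y = {}"
  unfolding Cs_def using certBy_unique by blast

lemma card_UN_Cs:
  assumes "finite S"
  shows "card (\<Union>x\<in>S. Cs t l x) = (\<Sum>x\<in>S. card (Cs t l x))"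
  by (rule card_UN_disjoint) (use assms finite_Cs Cs_disj in auto)

lemma subtree_cert:
  assumes "u \<in> nodes t" "u \<noteq> []" "\<forall>x\<in>subtree t u. card (Cs t l x) = c x"
    "card (subtree t u) \<le> (\<Sum>x\<in>subtree t u. c x)"
  shows "\<exists>x\<in>subtree t u. l x < length u"
proof (rule ccontr)
  assume H: "\<not> (\<exists>x\<in>subtree t u. l x < length u)"
  have sub: "(\<Union>x\<in>subtree t u. Cs t l x) \<subseteq> subtree t u - {u}"
  proof
    fix v assume "v \<in> (\<Union>x\<in>subtree t u. Cs t l x)"
    then obtain x where x: "x \<in> subtree t u" "v \<in> Cs t l x" by blast
    then have v: "v \<noteq> []" "x \<in> subtree t v" "l x < length v" by (auto simp: Cs_def certBy_def)
    obtain a where a: "x = u @ a" using x(1) by (auto simp: subtree_def)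
    obtain b where b: "x = v @ b" using v(2) by (auto simp: subtree_def)
    have lu: "length u \<le> l x" using H x(1) by (simp add: not_less)
    show "v \<in> subtree t u - {u}"
    proof (cases "\<exists>c. u = v @ c")
      case True then have "length v \<le> length u" by auto
      then show ?thesis using lu v(3) by simp
    next
      case False
      then obtain c where c: "v = u @ c" using prefix_comparable[OF a b] by blast
      moreover have "v \<in> nodes t" using v(2) subtree_root by blast
      moreover have "v \<noteq> u" using False by auto
      ultimately show ?thesis by (auto simp: subtree_def)
    qed
  qed
  have "card (\<Union>x\<in>subtree t u. Cs t l x) = (\<Sum>x\<in>subtree t u. card (Cs t l x))"
    by (rule card_UN_Cs[OF finite_subtree])
  also have "\<dots> = (\<Sum>x\<in>subtree t u. c x)" using assms(3) by simp
  finally have 1: "card (subtree t u) \<le> card (\<Union>x\<in>subtree t u. Cs t l x)" using assms(4) by simp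
  have 2: "card (\<Union>x\<in>subtree t u. Cs t l x) \<le> card (subtree t u - {u})"
    using sub by (rule card_mono[OF finite_Diff[OF finite_subtree]])
  have 3: "card (subtree t u - {u}) < card (subtree t u)"
    using self_subtree[OF assms(1)] finite_subtree by (rule card_Diff1_less[rotated])
  from 1 2 3 show False by simp
qed

definition tops :: "nat list set \<Rightarrow> nat list set" where
  "tops M = {y\<in>M. \<forall>z v. y = z @ v \<and> v \<noteq> [] \<longrightarrow> z \<notin> M}"

lemma decomp:
  assumes "M \<subseteq> nodes t" "\<forall>x\<in>M. \<forall>v. x @ v \<in> nodes t \<longrightarrow> x @ v \<in> M"
  shows "M = (\<Union>y\<in>tops M. subtree t y)"
proof (rule set_eqI, rule iffI)
  fix x assume xM: "x \<in> M"
  let ?P = "\<lambda>n. n \<le> length x \<and> take n x \<in> M"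
  have "?P (length x)" using xM by simp
  then have P0: "?P (LEAST n. ?P n)" by (rule LeastI)
  define n0 where "n0 = (LEAST n. ?P n)"
  define y where "y = take n0 x"
  have yM: "y \<in> M" using P0 by (simp add: y_def n0_def)
  have xy: "x = y @ drop n0 x" by (simp add: y_def)
  have "y \<in> tops M"
    unfolding tops_def
  proof (intro CollectI conjI allI impI yM)
    fix z v assume zv: "y = z @ v \<and> v \<noteq> []"
    show "z \<notin> M"
    proof
      assume zM: "z \<in> M"
      have ly: "length y = n0" using P0 by (simp add: y_def n0_def min_def)
      have lz: "length z < n0" using zv ly by auto
      have "take (length z) x = z" using zv xy by (metis append.assoc append_eq_conv_conj)
      then have "?P (length z)" using zM lz P0 by (simp add: n0_def)
      then have "n0 \<le> length z" unfolding n0_def by (rule Least_le)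
      then show False using lz by simp
    qed
  qed
  moreover have "x \<in> subtree t y" using xy xM assms(1) unfolding subtree_def by blast
  ultimately show "x \<in> (\<Union>y\<in>tops M. subtree t y)" by blast
next
  fix x assume "x \<in> (\<Union>y\<in>tops M. subtree t y)"
  then obtain y v where "y \<in> M" "x = y @ v" "x \<in> nodes t" by (auto simp: tops_def subtree_def)
  then show "x \<in> M" using assms(2) by blast
qed

lemma decomp_disj:
  assumes "y1 \<in> tops M" "y2 \<in> tops M" "y1 \<noteq> y2"
  shows "subtree t y1 \<inter> subtree t y2 = {}"
proof (rule ccontr)
  assume "subtree t y1 \<inter> subtree t y2 \<noteq> {}"
  then obtain x where "x \<in> subtree t y1" "x \<in> subtree t y2" by blast
  then obtain a b where a: "x = y1 @ a" and b: "x = y2 @ b" by (auto simp: subtree_def)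
  from prefix_comparable[OF a b] show False
  proof
    assume "\<exists>c. y2 = y1 @ c"
    then obtain c where "y2 = y1 @ c" by blast
    moreover have "c \<noteq> []" using calculation assms(3) by auto
    ultimately show False using assms(1,2) unfolding tops_def by blast
  next
    assume "\<exists>c. y1 = y2 @ c"
    then obtain c where "y1 = y2 @ c" by blast
    moreover have "c \<noteq> []" using calculation assms(3) by auto
    ultimately show False using assms(1,2) unfolding tops_def by blast
  qed
qed

lemma sum_decomp:
  assumes "M \<subseteq> nodes t" "\<forall>x\<in>M. \<forall>v. x @ v \<in> nodes t \<longrightarrow> x @ v \<in> M"
  shows "(\<Sum>x\<in>M. g x) = (\<Sum>y\<in>tops M. \<Sum>x\<in>subtree t y. g x)"
proof -
  have e: "M = (\<Union>y\<in>tops M. subtree t y)" by (rule decomp[OF assms])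
  have fin: "finite (tops M)"
  proof -
    have "tops M \<subseteq> nodes t" using assms(1) by (auto simp: tops_def)
    then show ?thesis using finite_nodes finite_subset by blast
  qed
  have "(\<Sum>x\<in>M. g x) = sum g (\<Union>y\<in>tops M. subtree t y)" using e by (rule arg_cong)
  also have "\<dots> = (\<Sum>y\<in>tops M. sum g (subtree t y))"
    by (rule sum.UNION_disjoint) (use fin finite_subtree decomp_disj in auto)
  finally show ?thesis .
qed



lemma forest_sum_zero:
  assumes "f \<in> closed_flows t"
  shows "(\<Sum>x\<in>forest_nodes t. f x) = 0"
proof -
  have M: "forest_nodes t \<subseteq> nodes t" by (auto simp: forest_nodes_def)
  have cl: "\<forall>x\<in>forest_nodes t. \<forall>v. x @ v \<in> nodes t \<longrightarrow> x @ v \<in> forest_nodes t"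
    by (auto simp: forest_nodes_def)
  have "\<forall>y\<in>tops (forest_nodes t). (\<Sum>x\<in>subtree t y. f x) = 0"
  proof
    fix y assume y: "y \<in> tops (forest_nodes t)"
    then have yf: "y \<in> forest_nodes t" by (simp add: tops_def)
    then have "y \<noteq> []" by (simp add: forest_nodes_def)
    then obtain i r where yi: "y = i # r" by (cases y) auto
    have "r = []"
    proof (rule ccontr)
      assume "r \<noteq> []"
      have yy: "y = [i] @ r" using yi by simp
      moreover have "[i] \<in> forest_nodes t"
        using yf yy prefix_node[of "[i]" r t] by (auto simp: forest_nodes_def)
      ultimately show False using y \<open>r \<noteq> []\<close> unfolding tops_def by blast
    qed
    then have "[i] \<in> forest_nodes t" "y = [i]" using yf yi by auto
    then show "(\<Sum>x\<in>subtree t y. f x) = 0" using assms by (simp add: closed_flows_def out_rate_def)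
  qed
  then show ?thesis using sum_decomp[OF M cl, of f] by simp
qed

lemma after_sum_nonneg:
  assumes "is_flow t f"
  shows "0 \<le> (\<Sum>x\<in>{x\<in>nodes t. precedes w x}. f x)"
proof -
  let ?M = "{x\<in>nodes t. precedes w x}"
  have M: "?M \<subseteq> nodes t" by auto
  have cl: "\<forall>x\<in>?M. \<forall>v. x @ v \<in> nodes t \<longrightarrow> x @ v \<in> ?M"
  proof (intro ballI allI impI)
    fix x v assume "x \<in> ?M" "x @ v \<in> nodes t"
    then show "x @ v \<in> ?M" using prec_ext[of v x] prec_trans by (cases "v = []") auto
  qed
  have "\<forall>y\<in>tops ?M. 0 \<le> (\<Sum>x\<in>subtree t y. f x)"
  proof
    fix y assume "y \<in> tops ?M"
    then have "y \<in> forest_nodes t" using prec_Nil by (auto simp: tops_def forest_nodes_def)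
    then show "0 \<le> (\<Sum>x\<in>subtree t y. f x)" using assms by (auto simp: is_flow_def out_rate_def)
  qed
  then show ?thesis using sum_decomp[OF M cl, of f] by (simp add: sum_nonneg)
qed

lemma prefix_sum_nonpos:
  assumes "f \<in> closed_flows t"
  shows "(\<Sum>x\<in>{x\<in>forest_nodes t. x = w \<or> precedes x w}. f x) \<le> 0"
proof -
  let ?A = "{x\<in>forest_nodes t. x = w \<or> precedes x w}"
  let ?B = "{x\<in>nodes t. precedes w x}"
  have B: "?B \<subseteq> forest_nodes t" using prec_Nil by (auto simp: forest_nodes_def)
  have U: "forest_nodes t = ?A \<union> ?B"
  proof (rule set_eqI, rule iffI)
    fix x assume x: "x \<in> forest_nodes t"
    then have "x = w \<or> precedes x w \<or> precedes w x" using prec_total by blast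
    then show "x \<in> ?A \<union> ?B" using x by (auto simp: forest_nodes_def)
  next
    fix x assume "x \<in> ?A \<union> ?B" then show "x \<in> forest_nodes t" using B by blast
  qed
  have D: "?A \<inter> ?B = {}" using prec_irrefl prec_trans by blast
  have fin: "finite (forest_nodes t)" using finite_nodes by (simp add: forest_nodes_def)
  have fA: "finite ?A" using fin by simp
  have fB: "finite ?B" using finite_nodes by simp
  have "(\<Sum>x\<in>forest_nodes t. f x) = (\<Sum>x\<in>?A. f x) + (\<Sum>x\<in>?B. f x)"
    using arg_cong[where f="sum f", OF U] sum.union_disjoint[OF fA fB D] by (rule trans)
  moreover have "(\<Sum>x\<in>forest_nodes t. f x) = 0" by (rule forest_sum_zero[OF assms])
  moreover have "0 \<le> (\<Sum>x\<in>?B. f x)" using assms by (intro after_sum_nonneg) (simp add: closed_flows_def)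
  ultimately show ?thesis by linarith
qed

lemma flow_int:
  assumes "f \<in> closed_flows t" "x \<in> forest_nodes t"
  shows "int (nat (f x + 1)) = f x + 1"
  using assms by (auto simp: closed_flows_def is_flow_def)

lemma subtree_sum:
  assumes "f \<in> closed_flows t" "u \<in> forest_nodes t"
  shows "card (subtree t u) \<le> (\<Sum>x\<in>subtree t u. nat (f x + 1))"
proof -
  have sf: "subtree t u \<subseteq> forest_nodes t" using assms(2) by (auto simp: subtree_def forest_nodes_def)
  have "int (\<Sum>x\<in>subtree t u. nat (f x + 1)) = (\<Sum>x\<in>subtree t u. int (nat (f x + 1)))"
    by (simp add: of_nat_sum)
  also have "\<dots> = (\<Sum>x\<in>subtree t u. f x + 1)"
  proof (rule sum.cong)
    fix x assume "x \<in> subtree t u"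
    then have "x \<in> forest_nodes t" using sf by blast
    then show "int (nat (f x + 1)) = f x + 1" by (rule flow_int[OF assms(1)])
  qed simp
  also have "\<dots> = out_rate t f u + int (card (subtree t u))"
    by (simp add: out_rate_def sum.distrib)
  finally have "int (\<Sum>x\<in>subtree t u. nat (f x + 1)) = out_rate t f u + int (card (subtree t u))" .
  moreover have "0 \<le> out_rate t f u" using assms by (auto simp: closed_flows_def is_flow_def)
  ultimately show ?thesis by linarith
qed



lemma count_step:
  assumes fl: "f \<in> closed_flows t" and c: "c = (\<lambda>x. nat (f x + 1))"
    and w: "w \<in> nodes t" "w \<noteq> []" and G: "\<forall>x\<in>nodes t. precedes x w \<longrightarrow> Good t c l x"
  shows "c w \<le> card (Dw t l w)"
proof -
  let ?A = "{x\<in>nodes t. x \<noteq> [] \<and> precedes x w}"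
  let ?A' = "{x\<in>nodes t. x \<noteq> [] \<and> (x = w \<or> precedes x w)}"
  let ?U = "\<Union>x\<in>?A. Cs t l x"
  let ?T = "(\<lambda>d. take d w) ` Dw t l w"
  have finA: "finite ?A" using finite_nodes by simp
  have cardCs: "card (Cs t l x) = c x" if "x \<in> ?A" for x
    using G that card_Cs[of x t l] unfolding Good_def by auto
  have sub1: "?U \<union> ?T \<subseteq> ?A'"
  proof
    fix u assume "u \<in> ?U \<union> ?T"
    then show "u \<in> ?A'"
    proof
      assume "u \<in> ?U"
      then obtain y where y: "y \<in> ?A" "u \<in> Cs t l y" by blast
      then have un: "u \<noteq> []" "y \<in> subtree t u" by (auto simp: Cs_def certBy_def)
      then obtain v where yv: "y = u @ v" by (auto simp: subtree_def)
      have "u \<in> nodes t" using y(2) certBy_node by (auto simp: Cs_def)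
      moreover have "precedes u w"
      proof (cases "v = []")
        case True then show ?thesis using yv y(1) by simp
      next
        case False then show ?thesis using yv y(1) prec_ext prec_trans by blast
      qed
      ultimately show "u \<in> ?A'" using un by simp
    next
      assume "u \<in> ?T"
      then obtain d where d: "d \<in> Dw t l w" "u = take d w" by blast
      then have d1: "1 \<le> d" "d \<le> length w" by (auto simp: Dw_def)
      have wu: "w = u @ drop d w" using d by simp
      have "u \<in> nodes t" using wu w(1) prefix_node[of u "drop d w" t] by simp
      moreover have "u \<noteq> []" using d d1 w by auto
      moreover have "u = w \<or> precedes u w" using wu prec_ext[of "drop d w" u] by (cases "drop d w = []") auto
      ultimately show "u \<in> ?A'" by simp
    qed
  qed
  have sub2: "?A' \<subseteq> ?U \<union> ?T"
  proof
    fix x assume x: "x \<in> ?A'"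
    show "x \<in> ?U \<union> ?T"
    proof (cases "\<exists>v. w = x @ v")
      case True
      then obtain v where v: "w = x @ v" by blast
      have tx: "take (length x) w = x" using v by simp
      have lx: "1 \<le> length x" "length x \<le> length w" using x v by (auto simp: Suc_le_eq)
      show ?thesis
      proof (cases "waitL t l x w")
        case True
        then have "length x \<in> Dw t l w" using lx tx by (simp add: Dw_def)
        then have "x \<in> ?T" using tx image_eqI[of x "\<lambda>d. take d w" "length x"] by simp
        then show ?thesis by blast
      next
        case False
        then obtain y where y: "y \<in> subtree t x" "precedes y w" "l y < length x"
          unfolding waitL_def by (auto simp: not_le)
        then obtain y' where y': "certBy t l x y'" "y' = y \<or> precedes y' y" using cert_min by blast
        have "y' \<in> subtree t x" using y' by (simp add: certBy_def)
        then have "y' \<in> nodes t" "y' \<noteq> []" using x by (auto simp: subtree_def)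
        moreover have "precedes y' w" using y' y prec_trans by blast
        ultimately have "y' \<in> ?A" by simp
        moreover have "x \<in> Cs t l y'" using y' x by (simp add: Cs_def)
        ultimately show ?thesis by blast
      qed
    next
      case False
      then have xw: "precedes x w" using x by auto
      have allprec: "\<forall>z\<in>subtree t x. precedes z w"
        using prec_nonprefix[OF xw False] by (auto simp: subtree_def)
      have xf: "x \<in> forest_nodes t" using x by (simp add: forest_nodes_def)
      have "\<forall>z\<in>subtree t x. card (Cs t l z) = c z"
      proof
        fix z assume z: "z \<in> subtree t x"
        then have "z \<in> nodes t" "z \<noteq> []" "precedes z w" using allprec x by (auto simp: subtree_def)
        then show "card (Cs t l z) = c z" using cardCs by simp
      qed
      moreover have "card (subtree t x) \<le> (\<Sum>z\<in>subtree t x. c z)" using subtree_sum[OF fl xf] c by simp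
      moreover have "x \<in> nodes t" "x \<noteq> []" using x by auto
      ultimately obtain y where y: "y \<in> subtree t x" "l y < length x"
        using subtree_cert[of x t l c] by blast
      then obtain y' where y': "certBy t l x y'" "y' = y \<or> precedes y' y" using cert_min by blast
      have "y' \<in> subtree t x" using y' by (simp add: certBy_def)
      then have "y' \<in> nodes t" "y' \<noteq> []" "precedes y' w" using x allprec by (auto simp: subtree_def)
      then have "y' \<in> ?A" by simp
      moreover have "x \<in> Cs t l y'" using y' x by (simp add: Cs_def)
      ultimately show ?thesis by blast
    qed
  qed
  have disj: "?U \<inter> ?T = {}"
  proof (rule ccontr)
    assume "?U \<inter> ?T \<noteq> {}"
    then obtain u y d where y: "y \<in> ?A" "u \<in> Cs t l y" and d: "d \<in> Dw t l w" "u = take d w" by blast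
    then have "waitL t l u w" by (simp add: Dw_def)
    moreover have "y \<in> subtree t u" "l y < length u" using y by (auto simp: Cs_def certBy_def)
    ultimately show False using y(1) unfolding waitL_def by (auto simp: not_le)
  qed
  have eqA: "?A' = ?U \<union> ?T" using sub1 sub2 by blast
  have finU: "finite ?U" using finA finite_Cs by blast
  have finT: "finite ?T" using finite_Dw by blast
  have cardT: "card ?T = card (Dw t l w)"
    by (rule card_image, rule inj_on_subset[OF take_inj]) (auto simp: Dw_def)
  have cardU: "card ?U = (\<Sum>x\<in>?A. c x)" using card_UN_Cs[OF finA] cardCs by simp
  have cardA': "card ?A' = (\<Sum>x\<in>?A. c x) + card (Dw t l w)"
    using eqA card_Un_disjoint[OF finU finT disj] cardU cardT by simp
  have A'eq: "?A' = {x\<in>forest_nodes t. x = w \<or> precedes x w}" by (auto simp: forest_nodes_def)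
  have s0: "(\<Sum>x\<in>?A'. f x) \<le> 0" using prefix_sum_nonpos[OF fl, of w] A'eq by simp
  have A'split: "?A' = insert w ?A" using w by auto
  have wA: "w \<notin> ?A" using prec_irrefl by simp
  have intc: "f x = int (c x) - 1" if "x \<in> ?A'" for x
    using flow_int[OF fl, of x] that c by (simp add: forest_nodes_def)
  have "(\<Sum>x\<in>?A'. f x) = (\<Sum>x\<in>?A'. int (c x) - 1)"
    by (rule sum.cong) (use intc in auto)
  also have "\<dots> = (\<Sum>x\<in>?A'. int (c x)) - int (card ?A')"
    by (simp add: sum_subtractf)
  also have "(\<Sum>x\<in>?A'. int (c x)) = int (c w) + (\<Sum>x\<in>?A. int (c x))"
    unfolding A'split using finA wA by simp
  also have "(\<Sum>x\<in>?A. int (c x)) = int (\<Sum>x\<in>?A. c x)" by (simp add: of_nat_sum)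
  finally have "(\<Sum>x\<in>?A'. f x) = int (c w) + int (\<Sum>x\<in>?A. c x) - int (card ?A')" .
  then show ?thesis using s0 cardA' by linarith
qed

definition downcl :: "ptree \<Rightarrow> nat list set \<Rightarrow> bool" where
  "downcl t S \<longleftrightarrow> S \<subseteq> nodes t \<and> (\<forall>x\<in>S. \<forall>y\<in>nodes t. precedes y x \<longrightarrow> y \<in> S)"

lemma construct:
  assumes fl: "f \<in> closed_flows t" and c: "c = (\<lambda>x. nat (f x + 1))"
  shows "downcl t S \<Longrightarrow> \<exists>l. l \<in> extensional (nodes t) \<and> (\<forall>x\<in>S. Good t c l x)"
proof (induction "card S" arbitrary: S)
  case 0
  have "finite S" using 0 finite_nodes finite_subset by (auto simp: downcl_def)
  then have "S = {}" using 0 by simp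
  then show ?case by (intro exI[of _ "\<lambda>_. undefined"]) (simp add: extensional_def)
next
  case (Suc n)
  have finS: "finite S" using Suc.prems finite_nodes finite_subset by (auto simp: downcl_def)
  have "S \<noteq> {}" using Suc.hyps(2) by auto
  then obtain w where wS: "w \<in> S" and wmax: "\<forall>y\<in>S. \<not> precedes w y" using max_exists finS by blast
  let ?S = "S - {w}"
  have dc: "downcl t ?S"
    unfolding downcl_def
  proof (intro conjI ballI impI)
    show "?S \<subseteq> nodes t" using Suc.prems by (auto simp: downcl_def)
    fix x y assume xy: "x \<in> ?S" "y \<in> nodes t" "precedes y x"
    then have "y \<in> S" using Suc.prems by (auto simp: downcl_def)
    moreover have "y \<noteq> w" using wmax xy by auto
    ultimately show "y \<in> ?S" by simp
  qed
  have "n = card ?S" using Suc.hyps(2) wS finS by simp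
  then obtain l where l: "l \<in> extensional (nodes t)" "\<forall>x\<in>?S. Good t c l x" using Suc.hyps(1) dc by blast
  have wN: "w \<in> nodes t" using wS Suc.prems by (auto simp: downcl_def)
  have predS: "\<forall>y\<in>nodes t. precedes y w \<longrightarrow> y \<in> ?S" using Suc.prems wS prec_irrefl by (auto simp: downcl_def)
  obtain v where v: "v \<le> length w" "w \<noteq> [] \<longrightarrow> card {d\<in>Dw t l w. v < d} = c w" "v = 0 \<or> v \<in> Dw t l w"
  proof (cases "w = []")
    case True then show ?thesis using that[of 0] by simp
  next
    case False
    have "\<forall>x\<in>nodes t. precedes x w \<longrightarrow> Good t c l x" using predS l(2) by blast
    then have "c w \<le> card (Dw t l w)" using count_step[OF fl c wN False] by blast
    moreover have "\<forall>d\<in>Dw t l w. 0 < d" by (auto simp: Dw_def)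
    ultimately obtain v where vv: "(v = 0 \<or> v \<in> Dw t l w) \<and> card {d\<in>Dw t l w. v < d} = c w"
      using ostat_exists[OF finite_Dw, of t l w "c w"] by blast
    moreover from vv have "v \<le> length w" by (auto simp: Dw_def)
    ultimately show ?thesis using that by blast
  qed
  define l' where "l' = l(w := v)"
  have agree: "\<forall>y\<in>nodes t. precedes y w \<longrightarrow> l y = l' y" using prec_irrefl by (auto simp: l'_def)
  have lw: "l' w = v" by (simp add: l'_def)
  have DwE: "Dw t l' w = Dw t l w" using Dw_local[OF agree] by simp
  have "Good t c l' w" unfolding Good_def using lw DwE v by simp
  moreover have "Good t c l' x" if x: "x \<in> ?S" for x
  proof -
    have "x \<noteq> w" "x \<in> S" using x by auto
    then have xw: "precedes x w" using wmax prec_total by blast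
    have "\<forall>y\<in>nodes t. precedes y x \<longrightarrow> l y = l' y" using xw prec_trans prec_irrefl by (auto simp: l'_def)
    moreover have "l x = l' x" using \<open>x \<noteq> w\<close> by (auto simp: l'_def)
    ultimately show ?thesis using Good_local l(2) x by blast
  qed
  moreover have "l' \<in> extensional (nodes t)" using l(1) wN by (auto simp: l'_def extensional_def)
  ultimately show ?case by blast
qed



lemma subtree_trans: "x \<in> subtree t u \<Longrightarrow> u \<in> subtree t v \<Longrightarrow> x \<in> subtree t v"
  by (auto simp: subtree_def)

lemma forward:
  assumes "l \<in> sticky_labelings t"
  shows "flow_of_labeling t l \<in> closed_flows t"
proof -
  have st: "sticky t l" using assms by (simp add: sticky_labelings_def)
  let ?F = "flow_of_labeling t l"
  have Fv: "?F x = int (card (Cs t l x)) - 1" if "x \<in> forest_nodes t" for x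
    using that cert_count_eq[OF st] by (simp add: flow_of_labeling_def)
  have orate: "out_rate t ?F v = int (card (\<Union>x\<in>subtree t v. Cs t l x)) - int (card (subtree t v))"
    if v: "v \<in> forest_nodes t" for v
  proof -
    have sf: "subtree t v \<subseteq> forest_nodes t" using v by (auto simp: subtree_def forest_nodes_def)
    have "out_rate t ?F v = (\<Sum>x\<in>subtree t v. int (card (Cs t l x)) - 1)"
      unfolding out_rate_def
    proof (rule sum.cong)
      fix x assume "x \<in> subtree t v" then show "?F x = int (card (Cs t l x)) - 1" using Fv sf by blast
    qed simp
    also have "\<dots> = int (\<Sum>x\<in>subtree t v. card (Cs t l x)) - int (card (subtree t v))"
      by (simp add: sum_subtractf of_nat_sum)
    also have "(\<Sum>x\<in>subtree t v. card (Cs t l x)) = card (\<Union>x\<in>subtree t v. Cs t l x)"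
      by (rule card_UN_Cs[OF finite_subtree, symmetric])
    finally show ?thesis .
  qed
  have finU: "finite (\<Union>x\<in>subtree t v. Cs t l x)" for v using finite_subtree finite_Cs by blast
  have cover: "subtree t v \<subseteq> (\<Union>x\<in>subtree t v. Cs t l x)" if v: "v \<in> forest_nodes t" for v
  proof
    fix u assume u: "u \<in> subtree t v"
    then have "u \<in> nodes t" "u \<noteq> []" using v by (auto simp: subtree_def forest_nodes_def)
    then obtain x where x: "certBy t l u x" using sticky_cert[OF st] by blast
    then have "x \<in> subtree t v" using u subtree_trans by (auto simp: certBy_def)
    moreover have "u \<in> Cs t l x" using x \<open>u \<noteq> []\<close> by (simp add: Cs_def)
    ultimately show "u \<in> (\<Union>x\<in>subtree t v. Cs t l x)" by blast
  qed
  have isf: "is_flow t ?F"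
    unfolding is_flow_def
  proof (intro ballI conjI)
    fix v assume v: "v \<in> forest_nodes t"
    show "-1 \<le> ?F v" using Fv[OF v] by simp
    have "card (subtree t v) \<le> card (\<Union>x\<in>subtree t v. Cs t l x)"
      using cover[OF v] finU by (rule card_mono[rotated])
    then show "0 \<le> out_rate t ?F v" using orate[OF v] by simp
  qed
  have cl: "out_rate t ?F [i] = 0" if i: "[i] \<in> forest_nodes t" for i
  proof -
    have "(\<Union>x\<in>subtree t [i]. Cs t l x) \<subseteq> subtree t [i]"
    proof
      fix u assume "u \<in> (\<Union>x\<in>subtree t [i]. Cs t l x)"
      then obtain x where x: "x \<in> subtree t [i]" "u \<in> Cs t l x" by blast
      then have u: "u \<noteq> []" "x \<in> subtree t u" "u \<in> nodes t"
        using certBy_node by (auto simp: Cs_def certBy_def)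
      obtain a where a: "x = [i] @ a" using x(1) by (auto simp: subtree_def)
      obtain b where b: "x = u @ b" using u(2) by (auto simp: subtree_def)
      have "\<exists>c. u = [i] @ c"
      proof (cases "\<exists>c. [i] = u @ c")
        case True
        then obtain c where "[i] = u @ c" by blast
        then have "u = [i]" using u(1) by (cases u) auto
        then show ?thesis by simp
      next
        case False then show ?thesis using prefix_comparable[OF a b] by blast
      qed
      then show "u \<in> subtree t [i]" using u(3) by (auto simp: subtree_def)
    qed
    then have "card (\<Union>x\<in>subtree t [i]. Cs t l x) \<le> card (subtree t [i])"
      using finite_subtree by (rule card_mono[rotated])
    moreover have "card (subtree t [i]) \<le> card (\<Union>x\<in>subtree t [i]. Cs t l x)"
      using cover[OF i] finU by (rule card_mono[rotated])
    ultimately show ?thesis using orate[OF i] by simp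
  qed
  show ?thesis unfolding closed_flows_def
    using isf cl by (simp add: flow_of_labeling_def)
qed

lemma prec_induct:
  assumes "\<And>w. w \<in> nodes t \<Longrightarrow> (\<And>y. y \<in> nodes t \<Longrightarrow> precedes y w \<Longrightarrow> P y) \<Longrightarrow> P w"
  shows "w \<in> nodes t \<Longrightarrow> P w"
proof (induction "card {y\<in>nodes t. precedes y w}" arbitrary: w rule: less_induct)
  case less
  show ?case
  proof (rule assms[OF less.prems])
    fix y assume y: "y \<in> nodes t" "precedes y w"
    have "{z\<in>nodes t. precedes z y} \<subset> {z\<in>nodes t. precedes z w}"
      using y prec_trans prec_irrefl by blast
    then have "card {z\<in>nodes t. precedes z y} < card {z\<in>nodes t. precedes z w}"
      using finite_nodes by (intro psubset_card_mono) auto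
    then show "P y" using less.hyps y by blast
  qed
qed

lemma injective:
  assumes l1: "l1 \<in> sticky_labelings t" and l2: "l2 \<in> sticky_labelings t"
    and eq: "flow_of_labeling t l1 = flow_of_labeling t l2"
  shows "l1 = l2"
proof -
  have s1: "sticky t l1" and s2: "sticky t l2" using l1 l2 by (auto simp: sticky_labelings_def)
  have ceq: "card (Cs t l1 x) = card (Cs t l2 x)" if "x \<in> nodes t" "x \<noteq> []" for x
  proof -
    have "x \<in> forest_nodes t" using that by (simp add: forest_nodes_def)
    then have "flow_of_labeling t l1 x = int (card (Cs t l1 x)) - 1"
      "flow_of_labeling t l2 x = int (card (Cs t l2 x)) - 1"
      using cert_count_eq[OF s1] cert_count_eq[OF s2] by (simp_all add: flow_of_labeling_def)
    then show ?thesis using eq by simp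
  qed
  have step: "l1 w = l2 w" if w1: "w \<in> nodes t" and IH: "\<And>y. y \<in> nodes t \<Longrightarrow> precedes y w \<Longrightarrow> l1 y = l2 y" for w
  proof -
      have agree: "\<forall>y\<in>nodes t. precedes y w \<longrightarrow> l1 y = l2 y" using IH by blast
      have DE: "Dw t l1 w = Dw t l2 w" using Dw_local[OF agree] .
      have G1: "Good t (\<lambda>x. card (Cs t l1 x)) l1 w" by (rule sticky_Good[OF s1 w1])
      have G2: "Good t (\<lambda>x. card (Cs t l2 x)) l2 w" by (rule sticky_Good[OF s2 w1])
      show "l1 w = l2 w"
      proof (cases "w = []")
        case True then show ?thesis using G1 G2 by (simp add: Good_def)
      next
        case False
        have "card {d\<in>Dw t l1 w. l1 w < d} = card {d\<in>Dw t l1 w. l2 w < d}"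
          using G1 G2 False ceq[OF w1 False] DE by (simp add: Good_def)
        moreover have "l1 w = 0 \<or> l1 w \<in> Dw t l1 w" "l2 w = 0 \<or> l2 w \<in> Dw t l1 w"
          using G1 G2 DE by (auto simp: Good_def)
        moreover have "\<forall>d\<in>Dw t l1 w. 0 < d" by (auto simp: Dw_def)
        ultimately show ?thesis using ostat_unique[OF finite_Dw] by blast
      qed
  qed
  have "\<forall>w. w \<in> nodes t \<longrightarrow> l1 w = l2 w" using prec_induct[of t "\<lambda>w. l1 w = l2 w", OF step] by blast
  then show ?thesis using l1 l2 by (intro extensionalityI[of _ "nodes t"]) (auto simp: sticky_labelings_def)
qed

lemma surjective:
  assumes fl: "f \<in> closed_flows t"
  shows "\<exists>l\<in>sticky_labelings t. flow_of_labeling t l = f"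
proof -
  define c where "c = (\<lambda>x. nat (f x + 1))"
  have "downcl t (nodes t)" by (simp add: downcl_def)
  then obtain l where l: "l \<in> extensional (nodes t)" "\<forall>x\<in>nodes t. Good t c l x"
    using construct[OF fl c_def] by blast
  have cs: "card (Cs t l x) = c x" if "x \<in> nodes t" "x \<noteq> []" for x
    using l(2) that card_Cs[of x t l] by (simp add: Good_def)
  have st: "sticky t l"
    unfolding sticky_def
  proof (intro conjI ballI impI)
    fix u assume "u \<in> nodes t" then show "l u \<le> depth u" using l(2) by (simp add: Good_def depth_def)
  next
    fix u assume u: "u \<in> nodes t" "0 < depth u"
    then have uf: "u \<in> forest_nodes t" "u \<noteq> []" by (auto simp: forest_nodes_def depth_def)
    have "\<forall>x\<in>subtree t u. card (Cs t l x) = c x"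
      using cs uf by (auto simp: subtree_def)
    moreover have "card (subtree t u) \<le> (\<Sum>x\<in>subtree t u. c x)" using subtree_sum[OF fl uf(1)] c_def by simp
    ultimately show "\<exists>v\<in>subtree t u. l v < depth u" using subtree_cert[OF u(1) uf(2)] by (simp add: depth_def)
  next
    fix u v w assume u: "u \<in> nodes t" and v: "v \<in> subtree t u" and lv: "l v = depth u"
      and w: "w \<in> subtree t u" and p: "precedes w v"
    show "depth u \<le> l w"
    proof (cases "depth u = 0")
      case True then show ?thesis by simp
    next
      case False
      have vn: "v \<in> nodes t" using v by (simp add: subtree_def)
      have "l v \<in> Dw t l v" using l(2) vn lv False by (auto simp: Good_def)
      then have wt: "waitL t l (take (l v) v) v" by (simp add: Dw_def)
      obtain a where "v = u @ a" using v by (auto simp: subtree_def)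
      then have "take (l v) v = u" using lv by (simp add: depth_def)
      then show ?thesis using wt w p by (simp add: waitL_def depth_def)
    qed
  qed
  have "flow_of_labeling t l = f"
  proof (rule ext)
    fix x show "flow_of_labeling t l x = f x"
    proof (cases "x \<in> forest_nodes t")
      case True
      then have "x \<in> nodes t" "x \<noteq> []" by (auto simp: forest_nodes_def)
      then have "int (cert_count t l x) = f x + 1"
        using cert_count_eq[OF st] cs flow_int[OF fl True] c_def by simp
      then show ?thesis using True by (simp add: flow_of_labeling_def)
    next
      case False
      then show ?thesis using fl by (simp add: flow_of_labeling_def closed_flows_def extensional_def)
    qed
  qed
  moreover have "l \<in> sticky_labelings t" using l(1) st by (simp add: sticky_labelings_def)
  ultimately show ?thesis by blast
qed

theorem mainTheorem6:
  fixes T :: ptree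
  assumes "num_edges T \<ge> 1"
  shows "bij_betw (flow_of_labeling T) (sticky_labelings T) (closed_flows T)"
  unfolding bij_betw_def
proof (intro conjI)
  show "inj_on (flow_of_labeling T) (sticky_labelings T)"
    by (rule inj_onI) (rule injective)
  show "flow_of_labeling T ` sticky_labelings T = closed_flows T"
    using forward surjective by blast
qed

end
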